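(* Let $A$ be a non-empty set and let $\phi:\ell_\infty(A)\to\mathbb R$ be a linear functional. Define $g_\phi:\ell_\infty(A)\to\mathbb R_+$ by $g_\phi(x^* )=|\phi(|x^*|)|$. Then $g_\phi\in H[\ell_1(A)]_+$ and $\|g_\phi\|_{FBL[\ell_1(A)]}=\sup\{|\phi(x^* )|:x^*\in B_{\ell_\infty(A)}\}$.
   Context: Identify $\ell_1(A)^*$ with $\ell_\infty(A)$. $H[\ell_1(A)]$ is the vector space of positively homogeneous functions $f:\ell_\infty(A)\to\mathbb R$ ($f(\lambda x^* )=\lambda f(x^* )$ for $\lambda>0$), ordered pointwise, with nonnegative cone $H[\ell_1(A)]_+$. For $f\in H[\ell_1(A)]$, $\|f\|_{FBL[\ell_1(A)]}:=\sup\{\sum_{k=1}^n|f(x_k^* )| : n\in\mathbb N,\ x_1^*,\dots,x_n^*\in\ell_\infty(A),\ \sup_{a\in A}\sum_{k=1}^n|x_k^*(a)|\le1\}\in[0,\infty]$. *)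

theory Defs
  imports "HOL-Analysis.Analysis" "HOL-Library.Extended_Real"
begin

text \<open>ell_infty(A), realised as the bounded real functions on A that vanish off A.\<close>
definition linf :: "'a set \<Rightarrow> ('a \<Rightarrow> real) set" where
  "linf A = {x. bdd_above ((\<lambda>a. \<bar>x a\<bar>) ` A) \<and> (\<forall>a. a \<notin> A \<longrightarrow> x a = 0)}"

definition linear_functional_linf :: "'a set \<Rightarrow> (('a \<Rightarrow> real) \<Rightarrow> real) \<Rightarrow> bool" where
  "linear_functional_linf A \<phi> \<longleftrightarrow>
     (\<forall>x\<in>linf A. \<forall>y\<in>linf A. \<phi> (\<lambda>a. x a + y a) = \<phi> x + \<phi> y) \<and>
     (\<forall>x\<in>linf A. \<forall>c::real. \<phi> (\<lambda>a. c * x a) = c * \<phi> x)"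

text \<open>Positively homogeneous functions on ell_infty(A) = ell_1(A)^*.\<close>
definition H_l1 :: "'a set \<Rightarrow> (('a \<Rightarrow> real) \<Rightarrow> real) set" where
  "H_l1 A = {f. \<forall>x\<in>linf A. \<forall>t::real. t > 0 \<longrightarrow> f (\<lambda>a. t * x a) = t * f x}"

definition H_l1_pos :: "'a set \<Rightarrow> (('a \<Rightarrow> real) \<Rightarrow> real) set" where
  "H_l1_pos A = {f \<in> H_l1 A. \<forall>x\<in>linf A. f x \<ge> 0}"

definition FBL_norm :: "'a set \<Rightarrow> (('a \<Rightarrow> real) \<Rightarrow> real) \<Rightarrow> ereal" where
  "FBL_norm A f = Sup {ereal (\<Sum>k<n. \<bar>f (xs k)\<bar>) | n xs.
       (n::nat) \<ge> 1 \<and> (\<forall>k<n. xs k \<in> linf A) \<and> (\<forall>a\<in>A. (\<Sum>k<n. \<bar>xs k a\<bar>) \<le> 1)}"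

definition g_phi :: "(('a \<Rightarrow> real) \<Rightarrow> real) \<Rightarrow> ('a \<Rightarrow> real) \<Rightarrow> real" where
  "g_phi \<phi> x = \<bar>\<phi> (\<lambda>a. \<bar>x a\<bar>)\<bar>"

end

theory Submission
  imports Defs
begin

lemma linf_iff: "x \<in> linf A \<longleftrightarrow> (\<exists>B. \<forall>a\<in>A. \<bar>x a\<bar> \<le> B) \<and> (\<forall>a. a \<notin> A \<longrightarrow> x a = 0)"
  unfolding linf_def bdd_above_def by auto

lemma linf_add: "x \<in> linf A \<Longrightarrow> y \<in> linf A \<Longrightarrow> (\<lambda>a. x a + y a) \<in> linf A"
proof -
  assume x: "x \<in> linf A" and y: "y \<in> linf A"
  then obtain B C where B: "\<forall>a\<in>A. \<bar>x a\<bar> \<le> B" and C: "\<forall>a\<in>A. \<bar>y a\<bar> \<le> C"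
    by (auto simp: linf_iff)
  have "\<forall>a\<in>A. \<bar>x a + y a\<bar> \<le> B + C"
    using B C by (smt (verit))
  then show ?thesis using x y by (auto simp: linf_iff)
qed

lemma linf_scale: "x \<in> linf A \<Longrightarrow> (\<lambda>a. c * x a) \<in> linf A"
proof -
  assume x: "x \<in> linf A"
  then obtain B where B: "\<forall>a\<in>A. \<bar>x a\<bar> \<le> B" by (auto simp: linf_iff)
  have "\<forall>a\<in>A. \<bar>c * x a\<bar> \<le> \<bar>c\<bar> * B"
    using B by (simp add: abs_mult mult_left_mono)
  then show ?thesis using x by (auto simp: linf_iff)
qed

lemma linf_abs: "x \<in> linf A \<Longrightarrow> (\<lambda>a. \<bar>x a\<bar>) \<in> linf A"
  by (auto simp: linf_iff)

lemma linf_max: "x \<in> linf A \<Longrightarrow> (\<lambda>a. max (x a) 0) \<in> linf A"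
proof -
  assume x: "x \<in> linf A"
  then obtain B where B: "\<forall>a\<in>A. \<bar>x a\<bar> \<le> B" by (auto simp: linf_iff)
  have "\<forall>a\<in>A. \<bar>max (x a) 0\<bar> \<le> B" using B by (smt (verit))
  then show ?thesis using x by (auto simp: linf_iff)
qed

lemma linf_zero: "(\<lambda>a. 0) \<in> linf A"
  by (auto simp: linf_iff)

lemma linf_sum: "(\<And>k. k < (n::nat) \<Longrightarrow> y k \<in> linf A) \<Longrightarrow> (\<lambda>a. \<Sum>k<n. c k * y k a) \<in> linf A"
proof (induction n)
  case 0 then show ?case using linf_zero by simp
next
  case (Suc n)
  have "(\<lambda>a. (\<Sum>k<n. c k * y k a) + c n * y n a) \<in> linf A"
    using Suc by (intro linf_add linf_scale) auto
  then show ?case by simp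
qed

lemma phi_sum:
  assumes lin: "linear_functional_linf A \<phi>"
  shows "(\<And>k. k < (n::nat) \<Longrightarrow> y k \<in> linf A) \<Longrightarrow> \<phi> (\<lambda>a. \<Sum>k<n. c k * y k a) = (\<Sum>k<n. c k * \<phi> (y k))"
proof (induction n)
  case 0
  have h: "\<forall>x\<in>linf A. \<forall>c. \<phi> (\<lambda>a. c * x a) = c * \<phi> x"
    using lin unfolding linear_functional_linf_def by blast
  from h[rule_format, OF linf_zero, of 0] show ?case by simp
next
  case (Suc n)
  have m1: "(\<lambda>a. \<Sum>k<n. c k * y k a) \<in> linf A" using Suc by (intro linf_sum) auto
  have m2: "(\<lambda>a. c n * y n a) \<in> linf A" using Suc by (intro linf_scale) auto
  have "\<phi> (\<lambda>a. (\<Sum>k<n. c k * y k a) + c n * y n a) = \<phi> (\<lambda>a. \<Sum>k<n. c k * y k a) + \<phi> (\<lambda>a. c n * y n a)"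
    using lin m1 m2 unfolding linear_functional_linf_def by fastforce
  also have "\<phi> (\<lambda>a. c n * y n a) = c n * \<phi> (y n)"
    using lin Suc.prems unfolding linear_functional_linf_def by auto
  finally show ?case using Suc by simp
qed

theorem lemma4p6:
  fixes A :: "'a set" and \<phi> :: "('a \<Rightarrow> real) \<Rightarrow> real"
  assumes "A \<noteq> {}"
    and "linear_functional_linf A \<phi>"
  shows "g_phi \<phi> \<in> H_l1_pos A \<and>
         FBL_norm A (g_phi \<phi>) =
           Sup {ereal \<bar>\<phi> x\<bar> | x. x \<in> linf A \<and> (\<forall>a\<in>A. \<bar>x a\<bar> \<le> 1)}"
proof
  note lin = assms(2)
  have sc: "\<And>x c. x \<in> linf A \<Longrightarrow> \<phi> (\<lambda>a. c * x a) = c * \<phi> x"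
    using lin unfolding linear_functional_linf_def by blast
  have ad: "\<And>x y. x \<in> linf A \<Longrightarrow> y \<in> linf A \<Longrightarrow> \<phi> (\<lambda>a. x a + y a) = \<phi> x + \<phi> y"
    using lin unfolding linear_functional_linf_def by blast
  show "g_phi \<phi> \<in> H_l1_pos A"
    unfolding H_l1_pos_def H_l1_def
  proof (intro CollectI conjI ballI allI impI)
    fix x :: "'a \<Rightarrow> real" and t :: real
    assume x: "x \<in> linf A" and t: "t > 0"
    have "g_phi \<phi> (\<lambda>a. t * x a) = \<bar>\<phi> (\<lambda>a. t * \<bar>x a\<bar>)\<bar>"
      using t by (simp add: g_phi_def abs_mult)
    also have "\<dots> = t * g_phi \<phi> x"
      using sc[OF linf_abs[OF x], of t] t by (simp add: g_phi_def abs_mult)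
    finally show "g_phi \<phi> (\<lambda>a. t * x a) = t * g_phi \<phi> x" .
  qed (simp add: g_phi_def)
  let ?S2 = "{ereal \<bar>\<phi> x\<bar> | x. x \<in> linf A \<and> (\<forall>a\<in>A. \<bar>x a\<bar> \<le> 1)}"
  show "FBL_norm A (g_phi \<phi>) = Sup ?S2"
    unfolding FBL_norm_def
  proof (rule antisym)
    show "Sup {ereal (\<Sum>k<n. \<bar>g_phi \<phi> (xs k)\<bar>) | n xs.
       (n::nat) \<ge> 1 \<and> (\<forall>k<n. xs k \<in> linf A) \<and> (\<forall>a\<in>A. (\<Sum>k<n. \<bar>xs k a\<bar>) \<le> 1)} \<le> Sup ?S2"
    proof (rule Sup_least, clarify)
      fix n :: nat and xs
      assume xs: "\<forall>k<n. xs k \<in> linf A" and b: "\<forall>a\<in>A. (\<Sum>k<n. \<bar>xs k a\<bar>) \<le> 1"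
      define y where "y = (\<lambda>k a. \<bar>xs k a\<bar>)"
      define c where "c = (\<lambda>k. sgn (\<phi> (y k)))"
      define z where "z = (\<lambda>a. \<Sum>k<n. c k * y k a)"
      have yl: "\<And>k. k < n \<Longrightarrow> y k \<in> linf A" using xs linf_abs unfolding y_def by blast
      have zl: "z \<in> linf A" unfolding z_def using yl by (intro linf_sum)
      have "\<forall>a\<in>A. \<bar>z a\<bar> \<le> 1"
      proof
        fix a assume a: "a \<in> A"
        have "\<bar>z a\<bar> \<le> (\<Sum>k<n. \<bar>c k * y k a\<bar>)" unfolding z_def by (rule sum_abs)
        also have "\<dots> \<le> (\<Sum>k<n. \<bar>xs k a\<bar>)"
          by (intro sum_mono) (auto simp: c_def y_def abs_mult sgn_if)
        finally show "\<bar>z a\<bar> \<le> 1" using b a by (meson order_trans)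
      qed
      then have mem: "ereal \<bar>\<phi> z\<bar> \<in> ?S2" using zl by blast
      have "\<phi> z = (\<Sum>k<n. c k * \<phi> (y k))" unfolding z_def using phi_sum[OF lin] yl by blast
      also have "\<dots> = (\<Sum>k<n. \<bar>g_phi \<phi> (xs k)\<bar>)"
        by (intro sum.cong) (auto simp: c_def g_phi_def y_def sgn_if)
      finally have "ereal (\<Sum>k<n. \<bar>g_phi \<phi> (xs k)\<bar>) \<le> ereal \<bar>\<phi> z\<bar>" by simp
      also have "\<dots> \<le> Sup ?S2" using mem by (rule Sup_upper)
      finally show "ereal (\<Sum>k<n. \<bar>g_phi \<phi> (xs k)\<bar>) \<le> Sup ?S2" .
    qed
  next
    show "Sup ?S2 \<le> Sup {ereal (\<Sum>k<n. \<bar>g_phi \<phi> (xs k)\<bar>) | n xs.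
       (n::nat) \<ge> 1 \<and> (\<forall>k<n. xs k \<in> linf A) \<and> (\<forall>a\<in>A. (\<Sum>k<n. \<bar>xs k a\<bar>) \<le> 1)}"
      (is "_ \<le> Sup ?S1")
    proof (rule Sup_least, clarify)
      fix x assume x: "x \<in> linf A" and b: "\<forall>a\<in>A. \<bar>x a\<bar> \<le> 1"
      define p where "p = (\<lambda>a. max (x a) 0)"
      define m where "m = (\<lambda>a. max (- x a) 0)"
      have pl: "p \<in> linf A" unfolding p_def using linf_max[OF x] .
      have ml: "m \<in> linf A" unfolding m_def using linf_max[OF linf_scale[OF x, of "-1"]] by simp
      define xs where "xs = (\<lambda>k::nat. if k = 0 then p else m)"
      have s2: "\<And>f. (\<Sum>k<(2::nat). f k) = f 0 + (f 1 :: real)"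
        by (simp add: numeral_2_eq_2)
      have mem: "ereal (\<Sum>k<2. \<bar>g_phi \<phi> (xs k)\<bar>) \<in> ?S1"
      proof -
        have "\<forall>k<2. xs k \<in> linf A" using pl ml by (auto simp: xs_def)
        moreover have "\<forall>a\<in>A. (\<Sum>k<2. \<bar>xs k a\<bar>) \<le> 1"
          using b by (auto simp: s2 xs_def p_def m_def)
        ultimately show ?thesis by (intro CollectI exI[of _ "2::nat"] exI[of _ xs]) simp
      qed
      have "x = (\<lambda>a. p a + (-1) * m a)" unfolding p_def m_def by (rule ext) simp
      then have "\<phi> x = \<phi> p - \<phi> m"
        using ad[OF pl linf_scale[OF ml, of "-1"]] sc[OF ml, of "-1"] by simp
      moreover have "(\<lambda>a. \<bar>p a\<bar>) = p" "(\<lambda>a. \<bar>m a\<bar>) = m"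
        unfolding p_def m_def by (auto intro!: ext)
      ultimately have "\<bar>\<phi> x\<bar> \<le> (\<Sum>k<2. \<bar>g_phi \<phi> (xs k)\<bar>)"
        by (simp add: s2 xs_def g_phi_def)
      then have "ereal \<bar>\<phi> x\<bar> \<le> ereal (\<Sum>k<2. \<bar>g_phi \<phi> (xs k)\<bar>)" by simp
      also have "\<dots> \<le> Sup ?S1" using mem by (rule Sup_upper)
      finally show "ereal \<bar>\<phi> x\<bar> \<le> Sup ?S1" .
    qed
  qed
qed

end
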